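(* Let $K\ge1$, $\alpha\in(0,1)$, $\beta\in(0,1)$. Let $S\subseteq\{1,\dots,K\}$ be a random subset in which each node is included independently with probability $\alpha$. For distinct $j,k\in\{1,\dots,K\}$, let $h_{jk}$ be i.i.d. $\mathcal{CN}(0,1)$, independent of $S$. For $k\notin S$, define $G_k=\frac1{\alpha K}\sum_{j\in S}|h_{jk}|^2$. Define the multicasting outage event $$\mathcal{E}^{\mathrm{mc}}_{\alpha,\beta,K}=\{\exists\,k\in\{1,\dots,K\}\setminus S:\ G_k\le1-\beta\}.$$ Then $$\Pr\{\mathcal{E}^{\mathrm{mc}}_{\alpha,\beta,K}\}\le K\,\Pr\{\mathcal{E}^{\mathrm{uc}}_{\alpha,\beta,K}\},$$ where $\mathcal{E}^{\mathrm{uc}}_{\alpha,\beta,K}=\{K_1<K,\ \frac1{\alpha K}\sum_{j=1}^{K_1}g_j\le1-\beta\}$ with $K_1\sim\mathrm{Binomial}(K,\alpha)$ independent of i.i.d. mean-1 exponential random variables $g_1,g_2,\dots$. Consequently, for every $\epsilon\in(0,\beta)$, $$\Pr\{\mathcal{E}^{\mathrm{mc}}_{\alpha,\beta,K}\}\le K\left[\exp(-\alpha K\epsilon^2/4)+\exp\{\alpha K\gamma(\beta,\epsilon)\}\right],$$ where $\gamma(\beta,\epsilon)=\beta-\epsilon+(1-\epsilon)\ln\frac{1-\beta}{1-\epsilon}$.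
   Context: This event is the multicasting outage event of the paper's two-phase protocol. In phase 1, the source broadcasts at a rate that each node $k$ decodes independently with probability $\alpha$; $S$ is the set of successful nodes. In phase 2, the nodes in $S$ each transmit with power $P/(\alpha K)$ at rate $\log_2(1+(1-\beta)P/N_0)$. A node $k\notin S$ fails exactly when its effective gain $G_k$ is at most $1-\beta$. Multicasting requires every node to decode, so an outage occurs if any node not in $S$ fails. *)

theory Defs
  imports "HOL-Probability.Probability"
begin

definition CN01_distributed :: "'a measure \<Rightarrow> ('a \<Rightarrow> complex) \<Rightarrow> bool" where
  "CN01_distributed M X \<longleftrightarrow>
     distributed M lborel X (\<lambda>z. ennreal (exp (- (cmod z)\<^sup>2) / pi))"

definition gamma_fn :: "real \<Rightarrow> real \<Rightarrow> real" where
  "gamma_fn \<beta> \<epsilon> = \<beta> - \<epsilon> + (1 - \<epsilon>) * ln ((1 - \<beta>) / (1 - \<epsilon>))"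

end

theory Submission
  imports Defs
begin


lemma cball_sq: "(0::real) \<le> s \<Longrightarrow> {z::complex. (cmod z)\<^sup>2 \<le> s} = cball 0 (sqrt s)"
proof safe
  fix x :: complex assume s: "0 \<le> s" and "x \<in> cball 0 (sqrt s)"
  then have "cmod x \<le> sqrt s" by (simp add: dist_norm)
  then have "(cmod x)\<^sup>2 \<le> (sqrt s)\<^sup>2" by (intro power_mono) auto
  with s show "(cmod x)\<^sup>2 \<le> s" by simp
qed (auto simp: real_le_rsqrt dist_norm)

lemma emeasure_disc: "(0::real) \<le> s \<Longrightarrow> emeasure lborel {z::complex. (cmod z)\<^sup>2 \<le> s} = ennreal (pi * s)"
  by (simp add: cball_sq emeasure_cball unit_ball_vol_2)

lemma gauss_disc:
  assumes a: "0 \<le> a"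
  shows "(\<integral>\<^sup>+(z::complex). ennreal (exp (-(cmod z)\<^sup>2)) * indicator {z. (cmod z)\<^sup>2 \<le> a} z \<partial>lborel)
         = ennreal (pi * (1 - exp (-a)))"
proof -
  define f where "f = (\<lambda>(z::complex) (s::real). ennreal (exp (- s)) * indicator {0..a} s * indicator {p. (cmod (fst p))\<^sup>2 \<le> snd p} (z, s))"
  have fm: "case_prod f \<in> borel_measurable (lborel \<Otimes>\<^sub>M lborel)"
    unfolding f_def by measurable
  have inner: "ennreal (exp (-(cmod z)\<^sup>2)) * indicator {z. (cmod z)\<^sup>2 \<le> a} z
      = (\<integral>\<^sup>+s. f z s \<partial>lborel) + ennreal (exp (-a)) * indicator {z. (cmod z)\<^sup>2 \<le> a} z" for z
  proof (cases "(cmod z)\<^sup>2 \<le> a")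
    case True
    define r where "r = (cmod z)\<^sup>2"
    have r0: "0 \<le> r" by (simp add: r_def)
    have "(\<integral>\<^sup>+s. f z s \<partial>lborel) = (\<integral>\<^sup>+s. ennreal (exp (- s)) * indicator {r..a} s \<partial>lborel)"
      unfolding r_def by (intro nn_integral_cong) (auto simp: f_def split: split_indicator dest: order_trans[OF zero_le_power2[of "cmod z"]])
    also have "\<dots> = ennreal ((- exp (- a)) - (- exp (- r)))"
      by (rule nn_integral_FTC_Icc) (use True in \<open>auto intro!: derivative_eq_intros simp: r_def\<close>)
    finally have 1: "(\<integral>\<^sup>+s. f z s \<partial>lborel) = ennreal (exp (- r) - exp (- a))" by simp
    have "exp (- a) \<le> exp (- r)" using True by (simp add: r_def)
    then show ?thesis using True
      by (simp add: 1 r_def ennreal_plus[symmetric] del: ennreal_plus)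
  next
    case False
    have "f z = (\<lambda>s. 0)"
      using False by (auto simp: f_def fun_eq_iff split: split_indicator)
    then show ?thesis using False by simp
  qed
  have "(\<integral>\<^sup>+(z::complex). ennreal (exp (-(cmod z)\<^sup>2)) * indicator {z. (cmod z)\<^sup>2 \<le> a} z \<partial>lborel)
      = (\<integral>\<^sup>+(z::complex). (\<integral>\<^sup>+s. f z s \<partial>lborel) + ennreal (exp (-a)) * indicator {z. (cmod z)\<^sup>2 \<le> a} z \<partial>lborel)"
    by (simp add: inner)
  also have "\<dots> = (\<integral>\<^sup>+(z::complex). (\<integral>\<^sup>+s. f z s \<partial>lborel) \<partial>lborel) + (\<integral>\<^sup>+(z::complex). ennreal (exp (-a)) * indicator {z. (cmod z)\<^sup>2 \<le> a} z \<partial>lborel)"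
    by (rule nn_integral_add) (use fm in \<open>auto intro!: lborel.borel_measurable_nn_integral\<close>)
  also have "(\<integral>\<^sup>+(z::complex). ennreal (exp (-a)) * indicator {z. (cmod z)\<^sup>2 \<le> a} z \<partial>lborel) = ennreal (exp (-a)) * ennreal (pi * a)"
    using a by (subst nn_integral_cmult_indicator) (auto simp: emeasure_disc)
  also have "(\<integral>\<^sup>+(z::complex). (\<integral>\<^sup>+s. f z s \<partial>lborel) \<partial>lborel) = (\<integral>\<^sup>+s. (\<integral>\<^sup>+(z::complex). f z s \<partial>lborel) \<partial>lborel)"
  proof -
    have psf: "pair_sigma_finite (lborel::complex measure) (lborel::real measure)"
      by (intro pair_sigma_finite.intro) (simp_all add: lborel.sigma_finite_measure_axioms)
    show ?thesis using pair_sigma_finite.Fubini'[OF psf fm] by simp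
  qed
  also have "\<dots> = (\<integral>\<^sup>+s. ennreal pi * (ennreal (s ^ 1 * exp (- s)) * indicator {0..a} s) \<partial>lborel)"
  proof (intro nn_integral_cong)
    fix s :: real
    show "(\<integral>\<^sup>+(z::complex). f z s \<partial>lborel) = ennreal pi * (ennreal (s ^ 1 * exp (- s)) * indicator {0..a} s)"
    proof (cases "s \<in> {0..a}")
      case True
      have "(\<integral>\<^sup>+(z::complex). f z s \<partial>lborel) = (\<integral>\<^sup>+(z::complex). ennreal (exp (- s)) * indicator {z. (cmod z)\<^sup>2 \<le> s} z \<partial>lborel)"
        using True by (intro nn_integral_cong) (auto simp: f_def split: split_indicator)
      also have "\<dots> = ennreal (exp (- s)) * ennreal (pi * s)"
        using True by (subst nn_integral_cmult_indicator) (auto simp: emeasure_disc)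
      finally show ?thesis using True
        by (simp add: ennreal_mult[symmetric] mult_ac)
    next
      case False
      then show ?thesis by (simp add: f_def)
    qed
  qed
  also have "\<dots> = ennreal pi * (\<integral>\<^sup>+s. ennreal (s ^ 1 * exp (- s)) * indicator {0..a} s \<partial>lborel)"
    by (rule nn_integral_cmult) auto
  also have "\<dots> = ennreal pi * ennreal ((1 - (\<Sum>n\<le>1. (a^n * exp (-a)) / fact n)) * fact 1)"
    using a by (subst nn_intergal_power_times_exp_Icc) auto
  also have "(1 - (\<Sum>n\<le>1. (a^n * exp (-a)) / fact n)) * fact 1 = 1 - exp (-a) - a * exp (- a)"
    by simp
  finally have eq: "(\<integral>\<^sup>+(z::complex). ennreal (exp (-(cmod z)\<^sup>2)) * indicator {z. (cmod z)\<^sup>2 \<le> a} z \<partial>lborel)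
     = ennreal pi * ennreal (1 - exp (-a) - a * exp (- a)) + ennreal (exp (-a)) * ennreal (pi * a)" .
  have "1 + a \<le> exp a" by (rule exp_ge_add_one_self)
  then have "(1 + a) * exp (-a) \<le> 1" by (simp add: exp_minus field_simps)
  then have nn: "0 \<le> 1 - exp (-a) - a * exp (- a)" by (simp add: algebra_simps)
  have p1: "0 \<le> pi * (1 - exp (-a) - a * exp (- a))" using nn by simp
  have p2: "0 \<le> exp (-a) * (pi * a)" using a by simp
  have "ennreal pi * ennreal (1 - exp (-a) - a * exp (- a)) + ennreal (exp (-a)) * ennreal (pi * a)
      = ennreal (pi * (1 - exp (-a) - a * exp (- a)) + exp (-a) * (pi * a))"
    using ennreal_plus[OF p1 p2] ennreal_mult[of pi "1 - exp (-a) - a * exp (- a)"] ennreal_mult[of "exp (-a)" "pi * a"] nn a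
    by simp
  also have "pi * (1 - exp (-a) - a * exp (- a)) + exp (-a) * (pi * a) = pi * (1 - exp (-a))"
    by (simp add: algebra_simps)
  finally show ?thesis unfolding eq .
qed


lemma (in prob_space) CN01_sq_exp:
  assumes D: "CN01_distributed M Z"
  shows "distributed M lborel (\<lambda>\<omega>. (cmod (Z \<omega>))\<^sup>2) (exponential_density 1)"
proof -
  have D': "distributed M lborel Z (\<lambda>z. ennreal (exp (- (cmod z)\<^sup>2) / pi))"
    using D by (simp add: CN01_distributed_def)
  have Zm[measurable]: "Z \<in> borel_measurable M"
    using distributed_measurable[OF D'] by simp
  have cdf: "emeasure M {x\<in>space M. (cmod (Z x))\<^sup>2 \<le> a} = ennreal (1 - exp (- a * 1))" if a: "0 \<le> a" for a
  proof -
    have Sm: "{z::complex. (cmod z)\<^sup>2 \<le> a} \<in> sets lborel" by measurable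
    have "emeasure M {x\<in>space M. (cmod (Z x))\<^sup>2 \<le> a} = emeasure (distr M lborel Z) {z. (cmod z)\<^sup>2 \<le> a}"
      using Sm by (subst emeasure_distr) (auto intro!: arg_cong2[where f=emeasure])
    also have "\<dots> = emeasure (density lborel (\<lambda>z. ennreal (exp (- (cmod z)\<^sup>2) / pi))) {z. (cmod z)\<^sup>2 \<le> a}"
      unfolding distributed_distr_eq_density[OF D'] ..
    also have "\<dots> = (\<integral>\<^sup>+z. ennreal (exp (- (cmod z)\<^sup>2) / pi) * indicator {z. (cmod z)\<^sup>2 \<le> a} z \<partial>lborel)"
      using Sm by (subst emeasure_density) auto
    also have "\<dots> = (\<integral>\<^sup>+z. ennreal (1 / pi) * (ennreal (exp (- (cmod z)\<^sup>2)) * indicator {z. (cmod z)\<^sup>2 \<le> a} z) \<partial>lborel)"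
    proof (intro nn_integral_cong)
      fix z :: complex assume "z \<in> space lborel"
      have "ennreal (exp (- (cmod z)\<^sup>2) / pi) = ennreal (1 / pi) * ennreal (exp (- (cmod z)\<^sup>2))"
        by (subst ennreal_mult[symmetric]) auto
      then show "ennreal (exp (- (cmod z)\<^sup>2) / pi) * indicator {z. (cmod z)\<^sup>2 \<le> a} z =
         ennreal (1 / pi) * (ennreal (exp (- (cmod z)\<^sup>2)) * indicator {z. (cmod z)\<^sup>2 \<le> a} z)"
        by (simp add: mult.assoc)
    qed
    also have "\<dots> = ennreal (1 / pi) * (\<integral>\<^sup>+(z::complex). ennreal (exp (- (cmod z)\<^sup>2)) * indicator {z. (cmod z)\<^sup>2 \<le> a} z \<partial>lborel)"
      by (rule nn_integral_cmult) measurable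
    also have "\<dots> = ennreal (1 / pi) * ennreal (pi * (1 - exp (-a)))"
      using a by (simp add: gauss_disc)
    also have "\<dots> = ennreal (1 - exp (- a * 1))"
      using a by (simp add: ennreal_mult[symmetric])
    finally show ?thesis .
  qed
  show ?thesis
    by (rule exponential_distributedI) (auto simp: cdf ennreal_minus ennreal_1[symmetric] simp del: ennreal_1)
qed



lemma xlnx_lower:
  fixes u :: real assumes u: "0 < u" "u \<le> 1"
  shows "(u\<^sup>2 - 1) / 2 \<le> u * ln u"
proof -
  let ?g = "\<lambda>x::real. x * ln x - (x\<^sup>2 - 1) / 2"
  have "?g 1 \<le> ?g u"
  proof (rule DERIV_nonpos_imp_nonincreasing[OF u(2)])
    fix x :: real assume x: "u \<le> x" "x \<le> 1"
    then have x0: "0 < x" using u by linarith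
    have "DERIV ?g x :> (ln x + 1 - x)"
      using x0 by (auto intro!: derivative_eq_intros simp: field_simps)
    moreover have "ln x + 1 - x \<le> 0" using ln_le_minus_one[OF x0] by linarith
    ultimately show "\<exists>y. DERIV ?g x :> y \<and> y \<le> 0" by blast
  qed
  then show ?thesis by simp
qed

lemma binom_chernoff:
  fixes K :: nat and \<alpha> \<epsilon> :: real
  assumes \<alpha>: "0 < \<alpha>" "\<alpha> < 1" and \<epsilon>: "0 < \<epsilon>" "\<epsilon> < 1"
  shows "(\<Sum>m\<in>{m. m \<le> K \<and> real m \<le> (1 - \<epsilon>) * \<alpha> * real K}. real (K choose m) * \<alpha>^m * (1 - \<alpha>)^(K - m))
         \<le> exp (- \<alpha> * real K * \<epsilon>\<^sup>2 / 4)"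
proof -
  define s where "s = 1 - \<epsilon>"
  define a where "a = (1 - \<epsilon>) * \<alpha> * real K"
  have s: "0 < s" "s < 1" using \<epsilon> by (auto simp: s_def)
  have "(\<Sum>m\<in>{m. m \<le> K \<and> real m \<le> a}. real (K choose m) * \<alpha>^m * (1 - \<alpha>)^(K - m))
      \<le> (\<Sum>m\<in>{m. m \<le> K \<and> real m \<le> a}. real (K choose m) * \<alpha>^m * (1 - \<alpha>)^(K - m) * s powr (real m - a))"
  proof (rule sum_mono)
    fix m assume "m \<in> {m. m \<le> K \<and> real m \<le> a}"
    then have "real m - a \<le> 0" by auto
    then have "1 \<le> s powr (real m - a)"
      using s by (metis powr_mono' powr_zero_eq_one less_eq_real_def order.strict_iff_not)
    moreover have "0 \<le> real (K choose m) * \<alpha>^m * (1 - \<alpha>)^(K - m)" using \<alpha> by auto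
    ultimately show "real (K choose m) * \<alpha>^m * (1 - \<alpha>)^(K - m)
        \<le> real (K choose m) * \<alpha>^m * (1 - \<alpha>)^(K - m) * s powr (real m - a)"
      by (metis mult_le_cancel_left1 mult.commute order.trans[OF _ order.refl] mult_left_mono mult_1_right)
  qed
  also have "\<dots> \<le> (\<Sum>m\<in>{..K}. real (K choose m) * \<alpha>^m * (1 - \<alpha>)^(K - m) * s powr (real m - a))"
    by (rule sum_mono2) (use \<alpha> in auto)
  also have "\<dots> = (\<Sum>m\<in>{..K}. real (K choose m) * (\<alpha> * s)^m * (1 - \<alpha>)^(K - m)) * s powr (- a)"
    unfolding sum_distrib_right
    by (intro sum.cong refl) (use s in \<open>simp add: powr_diff powr_realpow power_mult_distrib powr_minus divide_inverse\<close>)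
  also have "(\<Sum>m\<in>{..K}. real (K choose m) * (\<alpha> * s)^m * (1 - \<alpha>)^(K - m)) = (\<alpha> * s + (1 - \<alpha>))^K"
    by (subst binomial_ring) simp
  also have "\<alpha> * s + (1 - \<alpha>) = 1 - \<alpha> * \<epsilon>" by (simp add: s_def algebra_simps)
  finally have 1: "(\<Sum>m\<in>{m. m \<le> K \<and> real m \<le> a}. real (K choose m) * \<alpha>^m * (1 - \<alpha>)^(K - m))
      \<le> (1 - \<alpha> * \<epsilon>) ^ K * s powr (- a)" .
  have "\<alpha> * \<epsilon> < \<alpha>" using \<alpha> \<epsilon> by (simp add: mult_less_cancel_left1)
  then have ae: "0 < 1 - \<alpha> * \<epsilon>" using \<alpha> by linarith
  have "(1 - \<alpha> * \<epsilon>) ^ K * s powr (- a) = exp (real K * ln (1 - \<alpha> * \<epsilon>) - a * ln s)"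
    using ae s by (simp add: powr_def exp_diff exp_of_nat_mult[symmetric] exp_minus divide_inverse
        flip: powr_realpow)
  also have "\<dots> \<le> exp (- \<alpha> * real K * \<epsilon>\<^sup>2 / 4)"
  proof -
    have l1: "ln (1 - \<alpha> * \<epsilon>) \<le> - \<alpha> * \<epsilon>" using ln_le_minus_one[OF ae] by simp
    have l2: "(s\<^sup>2 - 1) / 2 \<le> s * ln s" using xlnx_lower s by simp
    define P where "P = \<alpha> * real K"
    have P0: "0 \<le> P" using \<alpha> by (simp add: P_def)
    have A: "real K * ln (1 - \<alpha> * \<epsilon>) \<le> - (P * \<epsilon>)"
    proof -
      have "real K * ln (1 - \<alpha> * \<epsilon>) \<le> real K * (- \<alpha> * \<epsilon>)" using l1 by (intro mult_left_mono) auto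
      then show ?thesis by (simp add: P_def algebra_simps)
    qed
    have B: "a * ln s = P * (s * ln s)" by (simp add: a_def s_def P_def)
    have C: "P * ((s\<^sup>2 - 1) / 2) \<le> P * (s * ln s)"
      using l2 P0 by (intro mult_left_mono) auto
    have D: "P * ((s\<^sup>2 - 1) / 2) = - (P * \<epsilon>) + (P * \<epsilon>\<^sup>2) / 2"
      by (simp add: s_def power2_eq_square field_simps)
    have E: "0 \<le> P * \<epsilon>\<^sup>2" using P0 by simp
    have F: "- \<alpha> * real K * \<epsilon>\<^sup>2 / 4 = - (P * \<epsilon>\<^sup>2) / 4" by (simp add: P_def)
    have "real K * ln (1 - \<alpha> * \<epsilon>) - a * ln s \<le> - \<alpha> * real K * \<epsilon>\<^sup>2 / 4"
      unfolding F B using A C D E by linarith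
    then show ?thesis by simp
  qed
  finally show ?thesis using 1 unfolding a_def by linarith
qed


lemma erlang_chernoff:
  fixes t c :: real assumes t: "0 < t"
  shows "erlang_CDF k 1 c \<le> exp (t * c) / (1 + t) ^ Suc k"
proof -
  define B where "B = exp (t * c) / (1 + t) ^ Suc k"
  have B0: "0 \<le> B" using t by (simp add: B_def)
  have pw: "ennreal (erlang_density k 1 x) * indicator {..c} x \<le> ennreal B * ennreal (erlang_density k (1 + t) x)" for x
  proof (cases "x < 0")
    case True then show ?thesis by (simp add: erlang_density_def)
  next
    case False
    then have x: "0 \<le> x" by simp
    have e1: "exp (- x) * exp (t * (c - x)) = exp (- x + t * (c - x))" by (rule exp_add[symmetric])
    have e2: "exp (t * c) * exp (- ((1 + t) * x)) = exp (t * c + - ((1 + t) * x))" by (rule exp_add[symmetric])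
    have e3: "- x + t * (c - x) = t * c + - ((1 + t) * x)" by (simp add: algebra_simps)
    have tp: "(1 + t) ^ Suc k \<noteq> 0" using t by simp
    have eq: "erlang_density k 1 x * exp (t * (c - x)) = B * erlang_density k (1 + t) x"
    proof -
      have "erlang_density k 1 x * exp (t * (c - x)) = x ^ k / fact k * (exp (- x) * exp (t * (c - x)))"
        using x by (simp add: erlang_density_def)
      also have "\<dots> = x ^ k / fact k * (exp (t * c) * exp (- ((1 + t) * x)))"
        unfolding e1 e2 e3 ..
      also have "\<dots> = (B * (1 + t) ^ Suc k) * (x ^ k * exp (- ((1 + t) * x)) / fact k)"
        using tp by (simp add: B_def)
      also have "\<dots> = B * erlang_density k (1 + t) x"
      proof -
        have m: "- ((1 + t) * x) = - (1 + t) * x" by (simp add: algebra_simps)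
        show ?thesis using x unfolding m by (simp add: erlang_density_def)
      qed
      finally show ?thesis .
    qed
    have le: "erlang_density k 1 x * indicator {..c} x \<le> erlang_density k 1 x * exp (t * (c - x))"
    proof (cases "x \<le> c")
      case True
      then have "1 \<le> exp (t * (c - x))" using t by simp
      from mult_left_mono[OF this erlang_density_nonneg[of 1 k x]]
      show ?thesis using True by simp
    next
      case False then show ?thesis by simp
    qed
    have "ennreal (erlang_density k 1 x) * indicator {..c} x = ennreal (erlang_density k 1 x * indicator {..c} x)"
      by (simp add: indicator_def)
    also have "\<dots> \<le> ennreal (B * erlang_density k (1 + t) x)"
      using le eq by (intro ennreal_leI) simp
    also have "\<dots> = ennreal B * ennreal (erlang_density k (1 + t) x)"
      using B0 t by (simp add: ennreal_mult)
    finally show ?thesis .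
  qed
  have "ennreal (erlang_CDF k 1 c) = (\<integral>\<^sup>+x. ennreal (erlang_density k 1 x) * indicator {..c} x \<partial>lborel)"
    by (simp add: nn_integral_erlang_density)
  also have "\<dots> \<le> (\<integral>\<^sup>+x. ennreal B * ennreal (erlang_density k (1 + t) x) \<partial>lborel)"
    by (intro nn_integral_mono pw)
  also have "\<dots> = ennreal B * (\<integral>\<^sup>+x. ennreal (erlang_density k (1 + t) x) \<partial>lborel)"
    by (rule nn_integral_cmult) simp
  also have "(\<integral>\<^sup>+x. ennreal (erlang_density k (1 + t) x) \<partial>lborel) = 1"
    using nn_integral_erlang_ith_moment[of "1 + t" k 0] t by simp
  finally have "ennreal (erlang_CDF k 1 c) \<le> ennreal B" by simp
  then show ?thesis using B0 by (simp add: B_def)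
qed

lemma erlang_chernoff2:
  fixes a c :: real and m :: nat
  assumes c: "0 < c" and ca: "c < a" and am: "a \<le> real m" and m: "1 \<le> m"
  shows "erlang_CDF (m - 1) 1 c \<le> exp (a - c + a * ln (c / a))"
proof -
  have a0: "0 < a" using c ca by simp
  define t where "t = a / c - 1"
  have t: "0 < t" using c ca by (simp add: t_def field_simps)
  have 1: "1 + t = a / c" by (simp add: t_def)
  have "erlang_CDF (m - 1) 1 c \<le> exp (t * c) / (1 + t) ^ Suc (m - 1)"
    by (rule erlang_chernoff[OF t])
  also have "Suc (m - 1) = m" using m by simp
  also have "t * c = a - c" using c by (simp add: t_def field_simps)
  also have "(1 + t) ^ m = (a / c) powr real m" unfolding 1 using a0 c by (simp add: powr_realpow)
  also have "exp (a - c) / (a / c) powr real m \<le> exp (a - c) / (a / c) powr a"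
  proof -
    have "(a / c) powr a \<le> (a / c) powr real m"
      using am a0 c ca by (intro powr_mono) (auto simp: field_simps)
    moreover have "0 < (a / c) powr a" using a0 c by simp
    ultimately show ?thesis by (intro divide_left_mono) auto
  qed
  also have "exp (a - c) / (a / c) powr a = exp (a - c + a * ln (c / a))"
  proof -
    have p: "(a / c) powr a = exp (a * ln (a / c))" using a0 c by (simp add: powr_def)
    have l: "ln (a / c) = - ln (c / a)" using a0 c by (simp add: ln_div)
    have "exp (a - c) / exp (a * ln (a / c)) = exp (a - c - a * ln (a / c))" by (rule exp_diff[symmetric])
    then show ?thesis unfolding p l by simp
  qed
  finally show ?thesis .
qed



lemma (in prob_space) indep_sets_reindex:
  assumes ind: "indep_sets F (f ` J)" and inj: "inj_on f J"
  shows "indep_sets (\<lambda>j. F (f j)) J"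
proof (rule indep_setsI)
  show "\<And>i. i \<in> J \<Longrightarrow> F (f i) \<subseteq> events" using ind by (auto simp: indep_sets_def)
  fix A L assume L: "L \<noteq> {}" "L \<subseteq> J" "finite L" and A: "\<forall>j\<in>L. A j \<in> F (f j)"
  have injL: "inj_on f L" using inj L(2) by (rule inj_on_subset)
  define B where "B = (\<lambda>i. A (the_inv_into L f i))"
  have Bf: "B (f j) = A j" if "j \<in> L" for j
    using the_inv_into_f_f[OF injL that] by (simp add: B_def)
  have "prob (\<Inter>i\<in>f ` L. B i) = (\<Prod>i\<in>f ` L. prob (B i))"
    by (rule indep_setsD[OF ind]) (use L A Bf in auto)
  moreover have "(\<Inter>i\<in>f ` L. B i) = (\<Inter>j\<in>L. A j)" using Bf by auto
  moreover have "(\<Prod>i\<in>f ` L. prob (B i)) = (\<Prod>j\<in>L. prob (A j))"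
    using Bf by (simp add: prod.reindex[OF injL])
  ultimately show "prob (\<Inter>j\<in>L. A j) = (\<Prod>j\<in>L. prob (A j))" by simp
qed

lemma (in prob_space) indep_vars_reindex:
  assumes ind: "indep_vars M' X (f ` J)" and inj: "inj_on f J"
  shows "indep_vars (\<lambda>j. M' (f j)) (\<lambda>j. X (f j)) J"
  using ind indep_sets_reindex[OF _ inj, of "\<lambda>i. sigma_sets (space M) {X i -` A \<inter> space M |A. A \<in> sets (M' i)}"]
  unfolding indep_vars_def by auto

lemma sum_pow_card:
  assumes "finite D"
  shows "(\<Sum>A\<in>Pow D. g (card A)) = (\<Sum>m\<le>card D. real (card D choose m) * g m)"
proof -
  have "(\<Sum>A\<in>Pow D. g (card A)) = (\<Sum>m\<in>{..card D}. \<Sum>A\<in>{x. x \<in> Pow D \<and> card x = m}. g (card A))"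
    by (rule sum.group[symmetric]) (use assms in \<open>auto intro: card_mono\<close>)
  also have "\<dots> = (\<Sum>m\<le>card D. real (card D choose m) * g m)"
  proof (intro sum.cong refl)
    fix m
    have "(\<Sum>A\<in>{x. x \<in> Pow D \<and> card x = m}. g (card A)) = (\<Sum>A\<in>{x. x \<in> Pow D \<and> card x = m}. g m)"
      by (intro sum.cong) auto
    also have "\<dots> = real (card {B. B \<subseteq> D \<and> card B = m}) * g m" by simp
    also have "card {B. B \<subseteq> D \<and> card B = m} = card D choose m" by (rule n_subsets[OF assms])
    finally show "(\<Sum>A\<in>{x. x \<in> Pow D \<and> card x = m}. g (card A)) = real (card D choose m) * g m" .
  qed
  finally show ?thesis .
qed


lemma (in prob_space) prob_S_eq:
  fixes S :: "'a \<Rightarrow> nat set"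
  assumes K: "K \<ge> 1"
    and S_sub: "\<And>\<omega>. \<omega> \<in> space M \<Longrightarrow> S \<omega> \<subseteq> {1..K}"
    and S_meas: "S \<in> measurable M (count_space UNIV)"
    and S_indep: "indep_vars (\<lambda>_. count_space UNIV) (\<lambda>k \<omega>. k \<in> S \<omega>) {1..K}"
    and S_prob: "\<And>k. k \<in> {1..K} \<Longrightarrow> measure M {\<omega> \<in> space M. k \<in> S \<omega>} = \<alpha>"
    and A: "A \<subseteq> {1..K}"
  shows "measure M {\<omega>\<in>space M. S \<omega> = A} = \<alpha> ^ card A * (1 - \<alpha>) ^ (K - card A)"
proof -
  have ev: "{\<omega>\<in>space M. k \<in> S \<omega>} \<in> events" for k
  proof -
    have "S -` {B. k \<in> B} \<inter> space M \<in> events" by (rule measurable_sets[OF S_meas]) simp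
    moreover have "S -` {B. k \<in> B} \<inter> space M = {\<omega>\<in>space M. k \<in> S \<omega>}" by auto
    ultimately show ?thesis by simp
  qed
  define Bk where "Bk = (\<lambda>k::nat. {b. b = (k \<in> A)})"
  have "prob (\<Inter>k\<in>{1..K}. (\<lambda>\<omega>. k \<in> S \<omega>) -` Bk k \<inter> space M) = (\<Prod>k\<in>{1..K}. prob ((\<lambda>\<omega>. k \<in> S \<omega>) -` Bk k \<inter> space M))"
    by (rule indep_varsD[OF S_indep]) (use K in auto)
  moreover have "(\<Inter>k\<in>{1..K}. (\<lambda>\<omega>. k \<in> S \<omega>) -` Bk k \<inter> space M) = {\<omega>\<in>space M. S \<omega> = A}"
  proof (intro equalityI subsetI)
    fix \<omega> assume "\<omega> \<in> (\<Inter>k\<in>{1..K}. (\<lambda>\<omega>. k \<in> S \<omega>) -` Bk k \<inter> space M)"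
    then have w: "\<omega> \<in> space M" and e: "\<And>k. k \<in> {1..K} \<Longrightarrow> (k \<in> S \<omega>) = (k \<in> A)"
      using K by (auto simp: Bk_def)
    have "S \<omega> = A" using S_sub[OF w] A e by blast
    then show "\<omega> \<in> {\<omega>\<in>space M. S \<omega> = A}" using w by simp
  qed (auto simp: Bk_def)
  moreover have "prob ((\<lambda>\<omega>. k \<in> S \<omega>) -` Bk k \<inter> space M) = (if k \<in> A then \<alpha> else 1 - \<alpha>)" if k: "k \<in> {1..K}" for k
  proof (cases "k \<in> A")
    case True
    then have "(\<lambda>\<omega>. k \<in> S \<omega>) -` Bk k \<inter> space M = {\<omega>\<in>space M. k \<in> S \<omega>}" by (auto simp: Bk_def)
    then show ?thesis using True S_prob[OF k] by simp
  next
    case False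
    then have "(\<lambda>\<omega>. k \<in> S \<omega>) -` Bk k \<inter> space M = space M - {\<omega>\<in>space M. k \<in> S \<omega>}" by (auto simp: Bk_def)
    then show ?thesis using False S_prob[OF k] prob_compl[OF ev[of k]] by simp
  qed
  ultimately have "measure M {\<omega>\<in>space M. S \<omega> = A} = (\<Prod>k\<in>{1..K}. (if k \<in> A then \<alpha> else 1 - \<alpha>))"
    by simp
  also have "\<dots> = (\<Prod>k\<in>{1..K} \<inter> {x. x \<in> A}. \<alpha>) * (\<Prod>k\<in>{1..K} \<inter> - {x. x \<in> A}. 1 - \<alpha>)"
    by (rule prod.If_cases) simp
  also have "{1..K} \<inter> {x. x \<in> A} = A" using A by auto
  also have "{1..K} \<inter> - {x. x \<in> A} = {1..K} - A" by auto
  finally show ?thesis using A by (simp add: card_Diff_subset finite_subset)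
qed

lemma (in prob_space) prob_T_eq:
  fixes h :: "'a \<Rightarrow> nat \<Rightarrow> nat \<Rightarrow> complex"
  assumes c: "0 \<le> c"
    and h_indep: "indep_vars (\<lambda>_. borel) (\<lambda>(j, k) \<omega>. h \<omega> j k)
                    {(j, k). j \<in> {1..K} \<and> k \<in> {1..K} \<and> j \<noteq> k}"
    and h_CN: "\<And>j k. j \<in> {1..K} \<Longrightarrow> k \<in> {1..K} \<Longrightarrow> j \<noteq> k \<Longrightarrow> CN01_distributed M (\<lambda>\<omega>. h \<omega> j k)"
    and k: "k \<in> {1..K}" and A: "A \<subseteq> {1..K} - {k}"
  shows "measure M {\<omega>\<in>space M. (\<Sum>j\<in>A. (cmod (h \<omega> j k))\<^sup>2) \<le> c}
         = (if card A = 0 then 1 else erlang_CDF (card A - 1) 1 c)"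
proof (cases "A = {}")
  case True
  then show ?thesis using c by (simp add: prob_space)
next
  case False
  have fA: "finite A" using A by (rule finite_subset) simp
  have ind1: "indep_vars (\<lambda>_. borel) (\<lambda>(j, k) \<omega>. h \<omega> j k) ((\<lambda>j. (j, k)) ` A)"
    by (rule indep_vars_subset[OF h_indep]) (use A k in auto)
  have ind2: "indep_vars (\<lambda>_. borel) (\<lambda>j. (\<lambda>(j, k) \<omega>. h \<omega> j k) (j, k)) A"
    using indep_vars_reindex[OF ind1] by (simp add: inj_on_def)
  have ind3: "indep_vars (\<lambda>_. borel) (\<lambda>j \<omega>. (cmod (h \<omega> j k))\<^sup>2) A"
    using indep_vars_compose2[OF ind2, of "\<lambda>_ z. (cmod z)\<^sup>2" "\<lambda>_. borel"] by simp
  have dist: "distributed M lborel (\<lambda>\<omega>. (cmod (h \<omega> j k))\<^sup>2) (exponential_density 1)" if "j \<in> A" for j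
    using that A k by (intro CN01_sq_exp h_CN) auto
  have "distributed M lborel (\<lambda>x. \<Sum>j\<in>A. (cmod (h x j k))\<^sup>2) (erlang_density (card A - 1) 1)"
    by (rule exponential_distributed_sum[OF fA False _ dist ind3]) auto
  from erlang_distributed_le[OF this _ c]
  show ?thesis using False fA by simp
qed


lemma (in prob_space) prob_ST_eq:
  fixes S :: "'a \<Rightarrow> nat set" and h :: "'a \<Rightarrow> nat \<Rightarrow> nat \<Rightarrow> complex"
  assumes S_h_indep: "indep_set
                 (sets (vimage_algebra (space M) S (count_space UNIV)))
                 (sets (vimage_algebra (space M)
                   (\<lambda>\<omega>. \<lambda>p \<in> {(j, k). j \<in> {1..K} \<and> k \<in> {1..K} \<and> j \<noteq> k}. case p of (j, k) \<Rightarrow> h \<omega> j k)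
                   (PiM {(j, k). j \<in> {1..K} \<and> k \<in> {1..K} \<and> j \<noteq> k} (\<lambda>_. borel))))"
    and k: "k \<in> {1..K}" and A: "A \<subseteq> {1..K} - {k}"
  shows "measure M {\<omega>\<in>space M. S \<omega> = A \<and> (\<Sum>j\<in>A. (cmod (h \<omega> j k))\<^sup>2) \<le> c}
         = measure M {\<omega>\<in>space M. S \<omega> = A} * measure M {\<omega>\<in>space M. (\<Sum>j\<in>A. (cmod (h \<omega> j k))\<^sup>2) \<le> c}"
proof -
  define I where "I = {(j, k). j \<in> {1..K} \<and> k \<in> {1..K} \<and> j \<noteq> k}"
  define H where "H = (\<lambda>\<omega>. \<lambda>p \<in> I. case p of (j, k) \<Rightarrow> h \<omega> j k)"
  define G where "G = (\<lambda>x::nat \<times> nat \<Rightarrow> complex. \<Sum>j\<in>A. (cmod (x (j, k)))\<^sup>2)"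
  have AI: "(j, k) \<in> I" if "j \<in> A" for j using that A k by (auto simp: I_def)
  have Gm: "G \<in> borel_measurable (PiM I (\<lambda>_. borel))"
    unfolding G_def
    by (intro borel_measurable_sum borel_measurable_power borel_measurable_norm
        measurable_compose[OF measurable_component_singleton[OF AI]]) auto
  define B where "B = G -` {..c} \<inter> space (PiM I (\<lambda>_. borel))"
  have B: "B \<in> sets (PiM I (\<lambda>_. borel))" unfolding B_def by (rule measurable_sets[OF Gm]) simp
  have s1: "S -` {A} \<inter> space M \<in> sets (vimage_algebra (space M) S (count_space UNIV))"
    by (rule in_vimage_algebra) simp
  have s2: "H -` B \<inter> space M \<in> sets (vimage_algebra (space M) H (PiM I (\<lambda>_. borel)))"
    by (rule in_vimage_algebra[OF B])
  have e1: "S -` {A} \<inter> space M = {\<omega>\<in>space M. S \<omega> = A}" by auto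
  have e2: "H -` B \<inter> space M = {\<omega>\<in>space M. (\<Sum>j\<in>A. (cmod (h \<omega> j k))\<^sup>2) \<le> c}"
  proof -
    have "H \<omega> \<in> space (PiM I (\<lambda>_. borel))" for \<omega>
      by (simp add: H_def space_PiM)
    moreover have "G (H \<omega>) = (\<Sum>j\<in>A. (cmod (h \<omega> j k))\<^sup>2)" for \<omega>
      unfolding G_def H_def using AI by (intro sum.cong) auto
    ultimately show ?thesis by (auto simp: B_def)
  qed
  have "prob ((S -` {A} \<inter> space M) \<inter> (H -` B \<inter> space M)) = prob (S -` {A} \<inter> space M) * prob (H -` B \<inter> space M)"
    by (rule indep_setD[OF S_h_indep[folded I_def, folded H_def] s1 s2])
  moreover have "(S -` {A} \<inter> space M) \<inter> (H -` B \<inter> space M)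
      = {\<omega>\<in>space M. S \<omega> = A \<and> (\<Sum>j\<in>A. (cmod (h \<omega> j k))\<^sup>2) \<le> c}"
    unfolding e1 e2 by auto
  ultimately show ?thesis unfolding e1 e2 by simp
qed

lemma (in prob_space) prob_K1_eq:
  fixes K1 :: "'a \<Rightarrow> nat"
  assumes K1_meas: "K1 \<in> measurable M (count_space UNIV)"
    and K1_distr: "distr M (count_space UNIV) K1 = measure_pmf (binomial_pmf K \<alpha>)"
    and \<alpha>: "0 \<le> \<alpha>" "\<alpha> \<le> 1"
  shows "measure M {\<omega>\<in>space M. K1 \<omega> = m} = real (K choose m) * \<alpha> ^ m * (1 - \<alpha>) ^ (K - m)"
proof -
  have "measure M {\<omega>\<in>space M. K1 \<omega> = m} = measure M (K1 -` {m} \<inter> space M)"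
    by (intro arg_cong[where f="measure M"]) auto
  also have "\<dots> = measure (distr M (count_space UNIV) K1) {m}"
    by (rule measure_distr[symmetric, OF K1_meas]) simp
  also have "\<dots> = pmf (binomial_pmf K \<alpha>) m"
    unfolding K1_distr by (rule measure_pmf_single)
  also have "\<dots> = real (K choose m) * \<alpha> ^ m * (1 - \<alpha>) ^ (K - m)"
    using \<alpha> by simp
  finally show ?thesis .
qed

lemma (in prob_space) prob_U_eq:
  fixes g :: "'a \<Rightarrow> nat \<Rightarrow> real"
  assumes c: "0 \<le> c"
    and g_indep: "indep_vars (\<lambda>_. borel) (\<lambda>i \<omega>. g \<omega> i) UNIV"
    and g_exp: "\<And>i. distributed M lborel (\<lambda>\<omega>. g \<omega> i) (\<lambda>x. ennreal (exponential_density 1 x))"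
  shows "measure M {\<omega>\<in>space M. (\<Sum>j=1..m. g \<omega> j) \<le> c}
         = (if m = 0 then 1 else erlang_CDF (m - 1) 1 c)"
proof (cases "m = 0")
  case True
  then show ?thesis using c by (simp add: prob_space)
next
  case False
  have ind: "indep_vars (\<lambda>_. borel) (\<lambda>i \<omega>. g \<omega> i) {1..m}"
    by (rule indep_vars_subset[OF g_indep]) simp
  have "distributed M lborel (\<lambda>x. \<Sum>j\<in>{1..m}. g x j) (erlang_density (card {1..m} - 1) 1)"
    by (rule exponential_distributed_sum[OF _ _ _ _ ind]) (use False g_exp in auto)
  from erlang_distributed_le[OF this _ c]
  show ?thesis using False by simp
qed

lemma (in prob_space) prob_KU_eq:
  fixes K1 :: "'a \<Rightarrow> nat" and g :: "'a \<Rightarrow> nat \<Rightarrow> real"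
  assumes K1_g_indep: "indep_set
                 (sets (vimage_algebra (space M) K1 (count_space UNIV)))
                 (sets (vimage_algebra (space M) g (PiM UNIV (\<lambda>_. borel))))"
  shows "measure M {\<omega>\<in>space M. K1 \<omega> = m \<and> (\<Sum>j=1..m. g \<omega> j) \<le> c}
         = measure M {\<omega>\<in>space M. K1 \<omega> = m} * measure M {\<omega>\<in>space M. (\<Sum>j=1..m. g \<omega> j) \<le> c}"
proof -
  define G where "G = (\<lambda>x::nat \<Rightarrow> real. \<Sum>j=1..m. x j)"
  have Gm: "G \<in> borel_measurable (PiM UNIV (\<lambda>_. borel))"
    unfolding G_def by measurable
  define B where "B = G -` {..c} \<inter> space (PiM UNIV (\<lambda>_::nat. (borel::real measure)))"
  have B: "B \<in> sets (PiM UNIV (\<lambda>_. borel))" unfolding B_def by (rule measurable_sets[OF Gm]) simp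
  have s1: "K1 -` {m} \<inter> space M \<in> sets (vimage_algebra (space M) K1 (count_space UNIV))"
    by (rule in_vimage_algebra) simp
  have s2: "g -` B \<inter> space M \<in> sets (vimage_algebra (space M) g (PiM UNIV (\<lambda>_. borel)))"
    by (rule in_vimage_algebra[OF B])
  have e1: "K1 -` {m} \<inter> space M = {\<omega>\<in>space M. K1 \<omega> = m}" by auto
  have e2: "g -` B \<inter> space M = {\<omega>\<in>space M. (\<Sum>j=1..m. g \<omega> j) \<le> c}"
    by (auto simp: B_def G_def space_PiM)
  have "prob ((K1 -` {m} \<inter> space M) \<inter> (g -` B \<inter> space M)) = prob (K1 -` {m} \<inter> space M) * prob (g -` B \<inter> space M)"
    by (rule indep_setD[OF K1_g_indep s1 s2])
  moreover have "(K1 -` {m} \<inter> space M) \<inter> (g -` B \<inter> space M)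
      = {\<omega>\<in>space M. K1 \<omega> = m \<and> (\<Sum>j=1..m. g \<omega> j) \<le> c}"
    unfolding e1 e2 by auto
  ultimately show ?thesis unfolding e1 e2 by simp
qed



lemma choose_le_Suc: "(n choose m) \<le> (Suc n choose m)"
  by (cases m) (auto simp: binomial_Suc_Suc)

lemma esum_bound:
  fixes \<mu> :: "nat set \<Rightarrow> real" and F :: "nat \<Rightarrow> real"
  assumes K: "1 \<le> K" and k: "k \<in> {1..K}" and \<alpha>: "0 < \<alpha>" "\<alpha> < 1" and F0: "\<And>m. 0 \<le> F m"
    and eq: "\<And>A. A \<subseteq> {1..K} - {k} \<Longrightarrow> \<mu> A = \<alpha> ^ card A * (1 - \<alpha>) ^ (K - card A) * F (card A)"
  shows "(\<Sum>A\<in>Pow ({1..K} - {k}). \<mu> A) \<le> (\<Sum>m<K. real (K choose m) * \<alpha> ^ m * (1 - \<alpha>) ^ (K - m) * F m)"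
proof -
  define D where "D = {1..K} - {k}"
  have fD: "finite D" by (simp add: D_def)
  have cD: "card D = K - 1" using k by (simp add: D_def)
  have "(\<Sum>A\<in>Pow D. \<mu> A) = (\<Sum>A\<in>Pow D. (\<lambda>m. \<alpha> ^ m * (1 - \<alpha>) ^ (K - m) * F m) (card A))"
  proof (rule sum.cong[OF refl])
    fix A assume "A \<in> Pow D"
    then have "A \<subseteq> {1..K} - {k}" by (simp add: D_def)
    then show "\<mu> A = (\<lambda>m. \<alpha> ^ m * (1 - \<alpha>) ^ (K - m) * F m) (card A)"
      by (simp add: eq)
  qed
  also have "\<dots> = (\<Sum>m\<le>card D. real (card D choose m) * (\<alpha> ^ m * (1 - \<alpha>) ^ (K - m) * F m))"
    by (rule sum_pow_card[OF fD])
  also have "\<dots> = (\<Sum>m\<le>K - 1. real ((K - 1) choose m) * (\<alpha> ^ m * (1 - \<alpha>) ^ (K - m) * F m))"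
    unfolding cD ..
  also have "\<dots> \<le> (\<Sum>m\<le>K - 1. real (K choose m) * \<alpha> ^ m * (1 - \<alpha>) ^ (K - m) * F m)"
  proof (rule sum_mono)
    fix m
    have "(K - 1) choose m \<le> K choose m"
      using choose_le_Suc[of "K - 1" m] K by simp
    then have c1: "real ((K - 1) choose m) \<le> real (K choose m)" by (rule of_nat_mono)
    have c2: "0 \<le> \<alpha> ^ m * (1 - \<alpha>) ^ (K - m) * F m" using \<alpha> F0[of m] by simp
    have "real ((K - 1) choose m) * (\<alpha> ^ m * (1 - \<alpha>) ^ (K - m) * F m)
        \<le> real (K choose m) * (\<alpha> ^ m * (1 - \<alpha>) ^ (K - m) * F m)"
      by (rule mult_right_mono[OF c1 c2])
    then show "real ((K - 1) choose m) * (\<alpha> ^ m * (1 - \<alpha>) ^ (K - m) * F m)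
        \<le> real (K choose m) * \<alpha> ^ m * (1 - \<alpha>) ^ (K - m) * F m"
      by (simp add: mult.assoc)
  qed
  also have "{..K - 1} = {..<K}" using K by auto
  finally show ?thesis unfolding D_def .
qed


lemma erlang_CDF_le1: "erlang_CDF k 1 x \<le> 1"
proof -
  have "0 \<le> (\<Sum>n\<le>k. (1 * x) ^ n * exp (- 1 * x) / fact n)" if "0 \<le> x"
    using that by (intro sum_nonneg) auto
  then show ?thesis by (auto simp: erlang_CDF_def)
qed

definition Fc :: "real \<Rightarrow> nat \<Rightarrow> real" where
  "Fc c m = (if m = 0 then 1 else erlang_CDF (m - 1) 1 c)"

definition bK :: "nat \<Rightarrow> real \<Rightarrow> nat \<Rightarrow> real" where
  "bK K \<alpha> m = real (K choose m) * \<alpha> ^ m * (1 - \<alpha>) ^ (K - m)"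

lemma Fc_nonneg: "0 \<le> Fc c m" by (simp add: Fc_def)
lemma Fc_le1: "Fc c m \<le> 1" by (simp add: Fc_def erlang_CDF_le1)
lemma bK_nonneg: "0 \<le> \<alpha> \<Longrightarrow> \<alpha> \<le> 1 \<Longrightarrow> 0 \<le> bK K \<alpha> m" by (simp add: bK_def)

lemma (in prob_space) RN_lemma:
  fixes K1 :: "'a \<Rightarrow> nat" and g :: "'a \<Rightarrow> nat \<Rightarrow> real"
  assumes \<alpha>: "0 < \<alpha>" "\<alpha> < 1" and c0: "0 < c"
    and K1_meas: "K1 \<in> measurable M (count_space UNIV)"
    and K1_distr: "distr M (count_space UNIV) K1 = measure_pmf (binomial_pmf K \<alpha>)"
    and g_indep: "indep_vars (\<lambda>_. borel) (\<lambda>i \<omega>. g \<omega> i) UNIV"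
    and g_exp: "\<And>i. distributed M lborel (\<lambda>\<omega>. g \<omega> i) (\<lambda>x. ennreal (exponential_density 1 x))"
    and K1_g_indep: "indep_set
                 (sets (vimage_algebra (space M) K1 (count_space UNIV)))
                 (sets (vimage_algebra (space M) g (PiM UNIV (\<lambda>_. borel))))"
  shows "measure M {\<omega>\<in>space M. K1 \<omega> < K \<and> (\<Sum>j=1..K1 \<omega>. g \<omega> j) \<le> c} = (\<Sum>m<K. bK K \<alpha> m * Fc c m)"
proof -
  have gm[measurable]: "(\<lambda>\<omega>. g \<omega> i) \<in> borel_measurable M" for i
    using distributed_measurable[OF g_exp[of i]] by simp
  have K1m[measurable]: "K1 \<in> measurable M (count_space UNIV)" by (rule K1_meas)
  define U where "U = (\<lambda>m. {\<omega>\<in>space M. K1 \<omega> = m \<and> (\<Sum>j=1..m. g \<omega> j) \<le> c})"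
  have "{\<omega>\<in>space M. K1 \<omega> < K \<and> (\<Sum>j=1..K1 \<omega>. g \<omega> j) \<le> c} = (\<Union>m\<in>{..<K}. U m)"
    by (auto simp: U_def)
  moreover have "U m \<in> sets M" for m unfolding U_def by measurable
  ultimately have "measure M {\<omega>\<in>space M. K1 \<omega> < K \<and> (\<Sum>j=1..K1 \<omega>. g \<omega> j) \<le> c} = (\<Sum>m<K. measure M (U m))"
    by (auto intro!: finite_measure_finite_Union simp: disjoint_family_on_def U_def)
  also have "\<dots> = (\<Sum>m<K. bK K \<alpha> m * Fc c m)"
  proof (intro sum.cong refl)
    fix m
    show "measure M (U m) = bK K \<alpha> m * Fc c m"
      unfolding U_def prob_KU_eq[OF K1_g_indep] prob_K1_eq[OF K1_meas K1_distr less_imp_le[OF \<alpha>(1)] less_imp_le[OF \<alpha>(2)]]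
        prob_U_eq[OF less_imp_le[OF c0] g_indep g_exp]
      by (simp add: bK_def Fc_def)
  qed
  finally show ?thesis .
qed

lemma (in prob_space) LP_lemma:
  fixes S :: "'a \<Rightarrow> nat set" and h :: "'a \<Rightarrow> nat \<Rightarrow> nat \<Rightarrow> complex"
  assumes K: "K \<ge> 1" and \<alpha>: "0 < \<alpha>" "\<alpha> < 1" and c0: "0 < c"
    and S_sub: "\<And>\<omega>. \<omega> \<in> space M \<Longrightarrow> S \<omega> \<subseteq> {1..K}"
    and S_meas: "S \<in> measurable M (count_space UNIV)"
    and S_indep: "indep_vars (\<lambda>_. count_space UNIV) (\<lambda>k \<omega>. k \<in> S \<omega>) {1..K}"
    and S_prob: "\<And>k. k \<in> {1..K} \<Longrightarrow> measure M {\<omega> \<in> space M. k \<in> S \<omega>} = \<alpha>"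
    and h_indep: "indep_vars (\<lambda>_. borel) (\<lambda>(j, k) \<omega>. h \<omega> j k)
                    {(j, k). j \<in> {1..K} \<and> k \<in> {1..K} \<and> j \<noteq> k}"
    and h_CN: "\<And>j k. j \<in> {1..K} \<Longrightarrow> k \<in> {1..K} \<Longrightarrow> j \<noteq> k \<Longrightarrow>
                 CN01_distributed M (\<lambda>\<omega>. h \<omega> j k)"
    and S_h_indep: "indep_set
                 (sets (vimage_algebra (space M) S (count_space UNIV)))
                 (sets (vimage_algebra (space M)
                   (\<lambda>\<omega>. \<lambda>p \<in> {(j, k). j \<in> {1..K} \<and> k \<in> {1..K} \<and> j \<noteq> k}. case p of (j, k) \<Rightarrow> h \<omega> j k)
                   (PiM {(j, k). j \<in> {1..K} \<and> k \<in> {1..K} \<and> j \<noteq> k} (\<lambda>_. borel))))"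
  shows "measure M {\<omega>\<in>space M. \<exists>k\<in>{1..K} - S \<omega>. (\<Sum>j\<in>S \<omega>. (cmod (h \<omega> j k))\<^sup>2) \<le> c}
         \<le> real K * (\<Sum>m<K. bK K \<alpha> m * Fc c m)"
proof -
  define P where "P = (\<Sum>m<K. bK K \<alpha> m * Fc c m)"
  define L where "L = {\<omega>\<in>space M. \<exists>k\<in>{1..K} - S \<omega>. (\<Sum>j\<in>S \<omega>. (cmod (h \<omega> j k))\<^sup>2) \<le> c}"
  define E where "E = (\<lambda>k A. {\<omega>\<in>space M. S \<omega> = A \<and> (\<Sum>j\<in>A. (cmod (h \<omega> j k))\<^sup>2) \<le> c})"
  have Em: "E k A \<in> sets M" if k: "k \<in> {1..K}" and A: "A \<subseteq> {1..K} - {k}" for k A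
  proof -
    have hm: "(\<lambda>\<omega>. h \<omega> j k) \<in> borel_measurable M" if "j \<in> A" for j
    proof -
      have "CN01_distributed M (\<lambda>\<omega>. h \<omega> j k)" using that A k by (intro h_CN) auto
      then have "distributed M lborel (\<lambda>\<omega>. h \<omega> j k) (\<lambda>z. ennreal (exp (- (cmod z)\<^sup>2) / pi))"
        by (simp add: CN01_distributed_def)
      from distributed_measurable[OF this] show ?thesis by simp
    qed
    have sq: "(\<lambda>z::complex. (cmod z)\<^sup>2) \<in> borel_measurable borel" by measurable
    have fm: "(\<lambda>\<omega>. \<Sum>j\<in>A. (cmod (h \<omega> j k))\<^sup>2) \<in> borel_measurable M"
    proof (rule borel_measurable_sum)
      fix j assume "j \<in> A"
      from measurable_compose[OF hm[OF this] sq]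
      show "(\<lambda>\<omega>. (cmod (h \<omega> j k))\<^sup>2) \<in> borel_measurable M" .
    qed
    have "(\<lambda>\<omega>. \<Sum>j\<in>A. (cmod (h \<omega> j k))\<^sup>2) -` {..c} \<inter> space M \<in> sets M"
      by (rule measurable_sets[OF fm]) simp
    moreover have "S -` {A} \<inter> space M \<in> sets M"
      by (rule measurable_sets[OF S_meas]) simp
    ultimately have "(S -` {A} \<inter> space M) \<inter> ((\<lambda>\<omega>. \<Sum>j\<in>A. (cmod (h \<omega> j k))\<^sup>2) -` {..c} \<inter> space M) \<in> sets M"
      by blast
    moreover have "(S -` {A} \<inter> space M) \<inter> ((\<lambda>\<omega>. \<Sum>j\<in>A. (cmod (h \<omega> j k))\<^sup>2) -` {..c} \<inter> space M) = E k A"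
      by (auto simp: E_def)
    ultimately show ?thesis by simp
  qed
  have Eeq: "measure M (E k A) = \<alpha> ^ card A * (1 - \<alpha>) ^ (K - card A) * Fc c (card A)"
    if k: "k \<in> {1..K}" and A: "A \<subseteq> {1..K} - {k}" for k A
  proof -
    have "measure M (E k A) = measure M {\<omega>\<in>space M. S \<omega> = A} * measure M {\<omega>\<in>space M. (\<Sum>j\<in>A. (cmod (h \<omega> j k))\<^sup>2) \<le> c}"
      unfolding E_def by (rule prob_ST_eq[OF S_h_indep k A])
    also have "measure M {\<omega>\<in>space M. S \<omega> = A} = \<alpha> ^ card A * (1 - \<alpha>) ^ (K - card A)"
      by (rule prob_S_eq[OF K S_sub S_meas S_indep S_prob]) (use A in auto)
    also have "measure M {\<omega>\<in>space M. (\<Sum>j\<in>A. (cmod (h \<omega> j k))\<^sup>2) \<le> c} = Fc c (card A)"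
      unfolding Fc_def by (rule prob_T_eq[OF less_imp_le[OF c0] h_indep h_CN k A])
    finally show ?thesis .
  qed
  have Esum: "(\<Sum>A\<in>Pow ({1..K} - {k}). measure M (E k A)) \<le> P" if k: "k \<in> {1..K}" for k
    unfolding P_def bK_def
    by (rule esum_bound[OF K k \<alpha> Fc_nonneg Eeq[OF k]])
  have Em': "E k A \<in> sets M" if "k \<in> {1..K}" "A \<in> Pow ({1..K} - {k})" for k A
    using Em[OF that(1)] that(2) by simp
  have Um: "(\<Union>A\<in>Pow ({1..K} - {k}). E k A) \<in> sets M" if "k \<in> {1..K}" for k
    by (rule sets.finite_UN) (simp, rule Em'[OF that])
  have UUm: "(\<Union>k\<in>{1..K}. \<Union>A\<in>Pow ({1..K} - {k}). E k A) \<in> sets M"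
    by (rule sets.finite_UN) (simp, rule Um)
  have sub: "L \<subseteq> (\<Union>k\<in>{1..K}. \<Union>A\<in>Pow ({1..K} - {k}). E k A)"
  proof
    fix \<omega> assume "\<omega> \<in> L"
    then have w: "\<omega> \<in> space M" and ex: "\<exists>k\<in>{1..K} - S \<omega>. (\<Sum>j\<in>S \<omega>. (cmod (h \<omega> j k))\<^sup>2) \<le> c"
      unfolding L_def by blast+
    then obtain k where k: "k \<in> {1..K} - S \<omega>" and le: "(\<Sum>j\<in>S \<omega>. (cmod (h \<omega> j k))\<^sup>2) \<le> c"
      by blast
    have kK: "k \<in> {1..K}" and kS: "k \<notin> S \<omega>" using k by auto
    have "S \<omega> \<in> Pow ({1..K} - {k})" using S_sub[OF w] kS by blast
    moreover have "\<omega> \<in> E k (S \<omega>)" using w le unfolding E_def by blast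
    ultimately show "\<omega> \<in> (\<Union>k\<in>{1..K}. \<Union>A\<in>Pow ({1..K} - {k}). E k A)" using kK by blast
  qed
  have "measure M L \<le> measure M (\<Union>k\<in>{1..K}. \<Union>A\<in>Pow ({1..K} - {k}). E k A)"
    by (rule finite_measure_mono[OF sub UUm])
  also have "\<dots> \<le> (\<Sum>k\<in>{1..K}. measure M (\<Union>A\<in>Pow ({1..K} - {k}). E k A))"
    by (rule finite_measure_subadditive_finite) (simp, use Um in blast)
  also have "\<dots> \<le> (\<Sum>k\<in>{1..K}. \<Sum>A\<in>Pow ({1..K} - {k}). measure M (E k A))"
  proof (rule sum_mono)
    fix k assume k: "k \<in> {1..K}"
    show "measure M (\<Union>A\<in>Pow ({1..K} - {k}). E k A) \<le> (\<Sum>A\<in>Pow ({1..K} - {k}). measure M (E k A))"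
      by (rule finite_measure_subadditive_finite) (simp, use Em'[OF k] in blast)
  qed
  also have "\<dots> \<le> (\<Sum>k\<in>{1..K}. P)"
    by (rule sum_mono) (rule Esum)
  also have "\<dots> = real K * P" by simp
  finally show ?thesis unfolding L_def P_def .
qed

lemma part2_lemma:
  fixes K :: nat and \<alpha> \<beta> \<epsilon> :: real
  assumes K: "K \<ge> 1" and \<alpha>: "0 < \<alpha>" "\<alpha> < 1" and \<beta>: "0 < \<beta>" "\<beta> < 1"
    and \<epsilon>: "0 < \<epsilon>" "\<epsilon> < \<beta>"
  shows "(\<Sum>m<K. bK K \<alpha> m * Fc ((1 - \<beta>) * \<alpha> * real K) m)
         \<le> exp (- \<alpha> * real K * \<epsilon>\<^sup>2 / 4) + exp (\<alpha> * real K * gamma_fn \<beta> \<epsilon>)"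
proof -
  define c where "c = (1 - \<beta>) * \<alpha> * real K"
  define a where "a = (1 - \<epsilon>) * \<alpha> * real K"
  define Q where "Q = exp (\<alpha> * real K * gamma_fn \<beta> \<epsilon>)"
  have aK: "0 < \<alpha> * real K" using \<alpha> K by simp
  have c0: "0 < c" using \<alpha> \<beta> K by (simp add: c_def)
  have b0: "0 \<le> bK K \<alpha> m" for m using \<alpha> by (simp add: bK_nonneg)
  have ca: "c < a"
  proof -
    have "(1 - \<beta>) * (\<alpha> * real K) < (1 - \<epsilon>) * (\<alpha> * real K)"
      using \<epsilon> aK by (intro mult_strict_right_mono) auto
    then show ?thesis unfolding a_def c_def by (simp add: mult.assoc)
  qed
  have Qeq: "a - c + a * ln (c / a) = \<alpha> * real K * gamma_fn \<beta> \<epsilon>"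
  proof -
    have "c / a = ((1 - \<beta>) * (\<alpha> * real K)) / ((1 - \<epsilon>) * (\<alpha> * real K))"
      by (simp add: a_def c_def mult.assoc)
    also have "\<dots> = (1 - \<beta>) / (1 - \<epsilon>)"
    proof -
      have nz: "\<alpha> * real K \<noteq> 0" using aK by linarith
      show ?thesis by (rule mult_divide_mult_cancel_right[OF nz])
    qed
    finally have "c / a = (1 - \<beta>) / (1 - \<epsilon>)" .
    then show ?thesis unfolding gamma_fn_def a_def c_def by (simp add: algebra_simps)
  qed
  have pw: "bK K \<alpha> m * Fc c m \<le> (if real m \<le> a then bK K \<alpha> m else 0) + bK K \<alpha> m * Q" for m
  proof (cases "real m \<le> a")
    case True
    have "bK K \<alpha> m * Fc c m \<le> bK K \<alpha> m" using Fc_le1[of c m] b0[of m] by (simp add: mult_left_le)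
    moreover have "0 \<le> bK K \<alpha> m * Q" using b0 by (simp add: Q_def)
    ultimately show ?thesis using True by simp
  next
    case False
    then have am: "a \<le> real m" by simp
    have m1: "1 \<le> m" using am ca c0 by (cases m) auto
    have "Fc c m \<le> exp (a - c + a * ln (c / a))"
      using erlang_chernoff2[OF c0 ca am m1] m1 by (simp add: Fc_def)
    then have "Fc c m \<le> Q" unfolding Qeq Q_def .
    then show ?thesis using False b0[of m] by (simp add: mult_left_mono)
  qed
  have "(\<Sum>m<K. bK K \<alpha> m * Fc c m) \<le> (\<Sum>m<K. (if real m \<le> a then bK K \<alpha> m else 0) + bK K \<alpha> m * Q)"
    by (intro sum_mono pw)
  also have "\<dots> = (\<Sum>m\<in>{..<K} \<inter> {m. real m \<le> a}. bK K \<alpha> m) + (\<Sum>m<K. bK K \<alpha> m) * Q"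
    by (simp add: sum.distrib sum_distrib_right sum.inter_restrict)
  also have "(\<Sum>m\<in>{..<K} \<inter> {m. real m \<le> a}. bK K \<alpha> m) \<le> (\<Sum>m\<in>{m. m \<le> K \<and> real m \<le> (1 - \<epsilon>) * \<alpha> * real K}. bK K \<alpha> m)"
    by (rule sum_mono2) (auto simp: b0 a_def)
  also have "\<dots> \<le> exp (- \<alpha> * real K * \<epsilon>\<^sup>2 / 4)"
    unfolding bK_def by (rule binom_chernoff) (use \<alpha> \<epsilon> \<beta> in auto)
  also have "(\<Sum>m<K. bK K \<alpha> m) \<le> (\<Sum>m\<le>K. bK K \<alpha> m)" by (rule sum_mono2) (auto simp: b0)
  also have "(\<Sum>m\<le>K. bK K \<alpha> m) = (\<alpha> + (1 - \<alpha>)) ^ K" unfolding bK_def by (subst binomial_ring) simp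
  also have "(\<alpha> + (1 - \<alpha>)) ^ K = (1::real)" by simp
  finally show ?thesis by (simp add: Q_def c_def)
qed


theorem proposition5:
  fixes M :: "'a measure" and N :: "'b measure"
    and K :: nat and \<alpha> \<beta> :: real
    and S :: "'a \<Rightarrow> nat set" and h :: "'a \<Rightarrow> nat \<Rightarrow> nat \<Rightarrow> complex"
    and K1 :: "'b \<Rightarrow> nat" and g :: "'b \<Rightarrow> nat \<Rightarrow> real"
  assumes K: "K \<ge> 1"
    and \<alpha>: "0 < \<alpha>" "\<alpha> < 1" and \<beta>: "0 < \<beta>" "\<beta> < 1"
    \<comment> \<open>the two-phase model: random subset S and fading coefficients h\<close>
    and M: "prob_space M"
    and S_sub: "\<And>\<omega>. \<omega> \<in> space M \<Longrightarrow> S \<omega> \<subseteq> {1..K}"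
    and S_meas: "S \<in> measurable M (count_space UNIV)"
    and S_indep: "prob_space.indep_vars M (\<lambda>_. count_space UNIV) (\<lambda>k \<omega>. k \<in> S \<omega>) {1..K}"
    and S_prob: "\<And>k. k \<in> {1..K} \<Longrightarrow> measure M {\<omega> \<in> space M. k \<in> S \<omega>} = \<alpha>"
    and h_indep: "prob_space.indep_vars M (\<lambda>_. borel) (\<lambda>(j, k) \<omega>. h \<omega> j k)
                    {(j, k). j \<in> {1..K} \<and> k \<in> {1..K} \<and> j \<noteq> k}"
    and h_CN: "\<And>j k. j \<in> {1..K} \<Longrightarrow> k \<in> {1..K} \<Longrightarrow> j \<noteq> k \<Longrightarrow>
                 CN01_distributed M (\<lambda>\<omega>. h \<omega> j k)"
    and S_h_indep: "prob_space.indep_set M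
                 (sets (vimage_algebra (space M) S (count_space UNIV)))
                 (sets (vimage_algebra (space M)
                   (\<lambda>\<omega>. \<lambda>p \<in> {(j, k). j \<in> {1..K} \<and> k \<in> {1..K} \<and> j \<noteq> k}. case p of (j, k) \<Rightarrow> h \<omega> j k)
                   (PiM {(j, k). j \<in> {1..K} \<and> k \<in> {1..K} \<and> j \<noteq> k} (\<lambda>_. borel))))"
    \<comment> \<open>the auxiliary unicasting model: K1 ~ Binomial(K, alpha), independent of i.i.d. Exp(1) g\<close>
    and N: "prob_space N"
    and K1_meas: "K1 \<in> measurable N (count_space UNIV)"
    and K1_distr: "distr N (count_space UNIV) K1 = measure_pmf (binomial_pmf K \<alpha>)"
    and g_indep: "prob_space.indep_vars N (\<lambda>_. borel) (\<lambda>i \<omega>. g \<omega> i) UNIV"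
    and g_exp: "\<And>i. distributed N lborel (\<lambda>\<omega>. g \<omega> i) (\<lambda>x. ennreal (exponential_density 1 x))"
    and K1_g_indep: "prob_space.indep_set N
                 (sets (vimage_algebra (space N) K1 (count_space UNIV)))
                 (sets (vimage_algebra (space N) g (PiM UNIV (\<lambda>_. borel))))"
  shows "measure M {\<omega> \<in> space M. \<exists>k \<in> {1..K} - S \<omega>.
              (1 / (\<alpha> * real K)) * (\<Sum>j \<in> S \<omega>. (cmod (h \<omega> j k))\<^sup>2) \<le> 1 - \<beta>}
           \<le> real K * measure N {\<omega> \<in> space N. K1 \<omega> < K \<and>
              (1 / (\<alpha> * real K)) * (\<Sum>j = 1..K1 \<omega>. g \<omega> j) \<le> 1 - \<beta>}
       \<and> (\<forall>\<epsilon>. 0 < \<epsilon> \<and> \<epsilon> < \<beta> \<longrightarrow>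
            measure M {\<omega> \<in> space M. \<exists>k \<in> {1..K} - S \<omega>.
              (1 / (\<alpha> * real K)) * (\<Sum>j \<in> S \<omega>. (cmod (h \<omega> j k))\<^sup>2) \<le> 1 - \<beta>}
            \<le> real K * (exp (- \<alpha> * real K * \<epsilon>\<^sup>2 / 4) + exp (\<alpha> * real K * gamma_fn \<beta> \<epsilon>)))"
  proof -
  have aK: "0 < \<alpha> * real K" using \<alpha> K by simp
  define c where "c = (1 - \<beta>) * \<alpha> * real K"
  have c0: "0 < c" using \<alpha> \<beta> K by (simp add: c_def)
  have conv: "((1 / (\<alpha> * real K)) * X \<le> 1 - \<beta>) = (X \<le> c)" for X
  proof -
    have "((1 / (\<alpha> * real K)) * X \<le> 1 - \<beta>) = (X / (\<alpha> * real K) \<le> 1 - \<beta>)" by simp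
    also have "\<dots> = (X \<le> (1 - \<beta>) * (\<alpha> * real K))" by (rule pos_divide_le_eq[OF aK])
    finally show ?thesis by (simp add: c_def mult.assoc)
  qed
  have setL: "{\<omega> \<in> space M. \<exists>k \<in> {1..K} - S \<omega>.
              (1 / (\<alpha> * real K)) * (\<Sum>j \<in> S \<omega>. (cmod (h \<omega> j k))\<^sup>2) \<le> 1 - \<beta>}
      = {\<omega>\<in>space M. \<exists>k\<in>{1..K} - S \<omega>. (\<Sum>j\<in>S \<omega>. (cmod (h \<omega> j k))\<^sup>2) \<le> c}"
    by (simp only: conv)
  have setR: "{\<omega> \<in> space N. K1 \<omega> < K \<and>
              (1 / (\<alpha> * real K)) * (\<Sum>j = 1..K1 \<omega>. g \<omega> j) \<le> 1 - \<beta>}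
      = {\<omega>\<in>space N. K1 \<omega> < K \<and> (\<Sum>j=1..K1 \<omega>. g \<omega> j) \<le> c}"
    by (simp only: conv)
  have LP: "measure M {\<omega>\<in>space M. \<exists>k\<in>{1..K} - S \<omega>. (\<Sum>j\<in>S \<omega>. (cmod (h \<omega> j k))\<^sup>2) \<le> c}
         \<le> real K * (\<Sum>m<K. bK K \<alpha> m * Fc c m)"
    by (rule prob_space.LP_lemma[OF M K \<alpha> c0 S_sub S_meas S_indep S_prob h_indep h_CN S_h_indep])
  have RN: "measure N {\<omega>\<in>space N. K1 \<omega> < K \<and> (\<Sum>j=1..K1 \<omega>. g \<omega> j) \<le> c} = (\<Sum>m<K. bK K \<alpha> m * Fc c m)"
    by (rule prob_space.RN_lemma[OF N \<alpha> c0 K1_meas K1_distr g_indep g_exp K1_g_indep])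
  show ?thesis
  proof (intro conjI allI impI)
    show "measure M {\<omega> \<in> space M. \<exists>k \<in> {1..K} - S \<omega>.
              (1 / (\<alpha> * real K)) * (\<Sum>j \<in> S \<omega>. (cmod (h \<omega> j k))\<^sup>2) \<le> 1 - \<beta>}
           \<le> real K * measure N {\<omega> \<in> space N. K1 \<omega> < K \<and>
              (1 / (\<alpha> * real K)) * (\<Sum>j = 1..K1 \<omega>. g \<omega> j) \<le> 1 - \<beta>}"
      unfolding setL setR RN by (rule LP)
    fix \<epsilon> :: real assume e: "0 < \<epsilon> \<and> \<epsilon> < \<beta>"
    have "(\<Sum>m<K. bK K \<alpha> m * Fc c m) \<le> exp (- \<alpha> * real K * \<epsilon>\<^sup>2 / 4) + exp (\<alpha> * real K * gamma_fn \<beta> \<epsilon>)"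
      unfolding c_def using e by (intro part2_lemma K \<alpha> \<beta>) auto
    then have "real K * (\<Sum>m<K. bK K \<alpha> m * Fc c m)
        \<le> real K * (exp (- \<alpha> * real K * \<epsilon>\<^sup>2 / 4) + exp (\<alpha> * real K * gamma_fn \<beta> \<epsilon>))"
      by (intro mult_left_mono) auto
    with LP show "measure M {\<omega> \<in> space M. \<exists>k \<in> {1..K} - S \<omega>.
              (1 / (\<alpha> * real K)) * (\<Sum>j \<in> S \<omega>. (cmod (h \<omega> j k))\<^sup>2) \<le> 1 - \<beta>}
            \<le> real K * (exp (- \<alpha> * real K * \<epsilon>\<^sup>2 / 4) + exp (\<alpha> * real K * gamma_fn \<beta> \<epsilon>))"
      unfolding setL by linarith
  qed
qed

end
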